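(* Let $i \geq 1$ and let $\psi$ be an $i$-nice $n$-dimensional unique sink orientation. Started at any vertex of $\psi$, the Random Edge algorithm performs an expected number of at most $O(n^{i+1})$ steps (before reaching the global sink).
   Context: Let $Q^n = 2^{[n]}$ be the vertex set of the $n$-cube, with $u,v$ adjacent iff $|u\oplus v|=1$; faces are $F_{J,v}=\{u : v\oplus u\subseteq J\}$ for $J\subseteq[n]$. A unique sink orientation (USO) is an orientation of the cube's edges such that every nonempty face has a unique sink (vertex with no outgoing edges within the face). The outmap $s_\psi(v)$ is the set of coordinates $j$ such that the edge $\{v,v\oplus\{j\}\}$ is directed away from $v$; the global sink is the vertex $t$ with $s_\psi(t)=\emptyset$. Write $v\rightsquigarrow u$ if there is a directed path from $v$ to $u$, and let $d(v,u)$ be the length of a shortest directed path from $v$ to $u$ ($\infty$ if none). The reachmap is $r_\psi(v)=s_\psi(v)\cup\{j : \exists u,\ v\rightsquigarrow u,\ j\in s_\psi(u)\}$. A vertex $v$ is $i$-covered by $u$ if $d(v,u)\le i$ and $r_\psi(u)\subsetneq r_\psi(v)$. The USO is $i$-nice if every vertex other than the global sink is $i$-covered by some vertex. Random Edge: at the current vertex, if it is not the global sink, choose an outgoing edge uniformly at random and move to its other endpoint; repeat. *)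

theory Defs
  imports "HOL-Library.Extended_Nonnegative_Real"
begin

text \<open>Vertices of the n-cube are subsets of {0..<n}. An orientation is given by its
outmap s: s v is the set of coordinates j such that the edge {v, v xor {j}} is
directed away from v.\<close>

definition sdiff :: "nat set \<Rightarrow> nat set \<Rightarrow> nat set" where
  "sdiff A B = (A - B) \<union> (B - A)"

definition cube :: "nat \<Rightarrow> nat set set" where
  "cube n = Pow {..<n}"

definition is_orientation :: "nat \<Rightarrow> (nat set \<Rightarrow> nat set) \<Rightarrow> bool" where
  "is_orientation n s \<longleftrightarrow>
     (\<forall>v\<in>cube n. s v \<subseteq> {..<n} \<and>
        (\<forall>j<n. j \<in> s v \<longleftrightarrow> j \<notin> s (sdiff v {j})))"

definition face :: "nat \<Rightarrow> nat set \<Rightarrow> nat set \<Rightarrow> nat set set" where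
  "face n J v = {u \<in> cube n. sdiff v u \<subseteq> J}"

definition is_face_sink :: "nat \<Rightarrow> (nat set \<Rightarrow> nat set) \<Rightarrow> nat set \<Rightarrow> nat set \<Rightarrow> nat set \<Rightarrow> bool" where
  "is_face_sink n s J v u \<longleftrightarrow> u \<in> face n J v \<and> s u \<inter> J = {}"

definition USO :: "nat \<Rightarrow> (nat set \<Rightarrow> nat set) \<Rightarrow> bool" where
  "USO n s \<longleftrightarrow> is_orientation n s \<and>
     (\<forall>J. J \<subseteq> {..<n} \<longrightarrow> (\<forall>v\<in>cube n. \<exists>!u. is_face_sink n s J v u))"

definition arcs :: "nat \<Rightarrow> (nat set \<Rightarrow> nat set) \<Rightarrow> (nat set \<times> nat set) set" where
  "arcs n s = {(v, sdiff v {j}) | v j. v \<in> cube n \<and> j \<in> s v}"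

definition reaches :: "nat \<Rightarrow> (nat set \<Rightarrow> nat set) \<Rightarrow> nat set \<Rightarrow> nat set \<Rightarrow> bool" where
  "reaches n s v u \<longleftrightarrow> (v, u) \<in> (arcs n s)\<^sup>*"

definition dist_le :: "nat \<Rightarrow> (nat set \<Rightarrow> nat set) \<Rightarrow> nat set \<Rightarrow> nat set \<Rightarrow> nat \<Rightarrow> bool" where
  "dist_le n s v u k \<longleftrightarrow> (\<exists>m\<le>k. (v, u) \<in> (arcs n s) ^^ m)"

definition reachmap :: "nat \<Rightarrow> (nat set \<Rightarrow> nat set) \<Rightarrow> nat set \<Rightarrow> nat set" where
  "reachmap n s v = s v \<union> {j. \<exists>u. reaches n s v u \<and> j \<in> s u}"

definition covered :: "nat \<Rightarrow> (nat set \<Rightarrow> nat set) \<Rightarrow> nat \<Rightarrow> nat set \<Rightarrow> nat set \<Rightarrow> bool" where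
  "covered n s i v u \<longleftrightarrow> dist_le n s v u i \<and> reachmap n s u \<subset> reachmap n s v"

definition nice :: "nat \<Rightarrow> (nat set \<Rightarrow> nat set) \<Rightarrow> nat \<Rightarrow> bool" where
  "nice n s i \<longleftrightarrow> (\<forall>v\<in>cube n. s v \<noteq> {} \<longrightarrow> (\<exists>u. covered n s i v u))"

text \<open>Random Edge: re_dist n s v0 k u is the probability that the walk started at v0
is at the non-sink vertex u after k steps (the walk stops at the global sink).\<close>
fun re_dist :: "nat \<Rightarrow> (nat set \<Rightarrow> nat set) \<Rightarrow> nat set \<Rightarrow> nat \<Rightarrow> nat set \<Rightarrow> real" where
  "re_dist n s v0 0 u = (if u = v0 \<and> s u \<noteq> {} then 1 else 0)"
| "re_dist n s v0 (Suc k) u =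
     (if s u \<noteq> {} then
        (\<Sum>w\<in>cube n. \<Sum>j\<in>s w. if sdiff w {j} = u then re_dist n s v0 k w / real (card (s w)) else 0)
      else 0)"

text \<open>Expected number of steps T = \<Sum>_k P(X_k is not the global sink) = \<Sum>_k P(T > k).\<close>
definition RE_expected_steps :: "nat \<Rightarrow> (nat set \<Rightarrow> nat set) \<Rightarrow> nat set \<Rightarrow> ennreal" where
  "RE_expected_steps n s v0 = (\<Sum>k. ennreal (\<Sum>u\<in>cube n. re_dist n s v0 k u))"

end

theory Submission
  imports Defs
begin

definition T :: "(nat set \<Rightarrow> nat set) \<Rightarrow> (nat set \<Rightarrow> real) \<Rightarrow> nat set \<Rightarrow> real" where
  "T s h x = (\<Sum>j\<in>s x. h (sdiff x {j})) / real (card (s x))"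

definition ns :: "(nat set \<Rightarrow> nat set) \<Rightarrow> nat set \<Rightarrow> real" where
  "ns s x = (if s x = {} then 0 else 1)"

lemma T_app: "T s h x = (\<Sum>j\<in>s x. h (sdiff x {j})) / real (card (s x))"
  by (simp add: T_def)

lemma T_nonneg: "(\<And>x. h x \<ge> 0) \<Longrightarrow> T s h x \<ge> 0"
  unfolding T_def by (intro divide_nonneg_nonneg sum_nonneg) auto

lemma Tpow_nonneg: "(\<And>x. h x \<ge> 0) \<Longrightarrow> (T s ^^ k) h x \<ge> 0"
  by (induction k arbitrary: x) (auto intro: T_nonneg)

lemma T_lin: "T s (\<lambda>x. c * g x + h x) y = c * T s g y + T s h y"
  unfolding T_def by (simp add: sum.distrib sum_distrib_left add_divide_distrib)

lemma Tpow_lin: "(T s ^^ k) (\<lambda>x. c * g x + h x) y = c * (T s ^^ k) g y + (T s ^^ k) h y"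
proof (induction k arbitrary: y)
  case 0 then show ?case by simp
next
  case (Suc k)
  have "(T s ^^ Suc k) (\<lambda>x. c * g x + h x) = T s ((T s ^^ k) (\<lambda>x. c * g x + h x))" by simp
  also have "(T s ^^ k) (\<lambda>x. c * g x + h x) = (\<lambda>x. c * (T s ^^ k) g x + (T s ^^ k) h x)"
    using Suc by auto
  finally show ?case by (simp add: T_lin)
qed

lemma Tpow_zero: "(T s ^^ k) (\<lambda>_. 0) y = 0"
proof (induction k arbitrary: y)
  case 0 then show ?case by simp
next
  case (Suc k)
  have "(T s ^^ k) (\<lambda>_. 0) = (\<lambda>_. 0)" using Suc by auto
  then show ?case by (simp add: T_app[of s "\<lambda>_. 0" y])
qed

lemma T_sink: "s x = {} \<Longrightarrow> T s h x = 0" unfolding T_app by simp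

lemma Tpow_sink: "s x = {} \<Longrightarrow> k \<ge> 1 \<Longrightarrow> (T s ^^ k) h x = 0"
  by (cases k) (auto simp: T_sink)

locale orient =
  fixes n :: nat and s :: "nat set \<Rightarrow> nat set"
  assumes ori: "is_orientation n s"
begin

lemma s_sub: "v \<in> cube n \<Longrightarrow> s v \<subseteq> {..<n}"
  using ori unfolding is_orientation_def by auto

lemma fin_s: "v \<in> cube n \<Longrightarrow> finite (s v)"
  using s_sub finite_subset by blast

lemma card_s: "v \<in> cube n \<Longrightarrow> card (s v) \<le> n"
  using s_sub card_mono[of "{..<n}" "s v"] by auto

lemma fin_cube: "finite (cube n)" unfolding cube_def by simp

lemma nb_cube: "v \<in> cube n \<Longrightarrow> j \<in> s v \<Longrightarrow> sdiff v {j} \<in> cube n"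
  using s_sub[of v] unfolding cube_def sdiff_def by auto

lemma arc_iff: "(v,u) \<in> arcs n s \<longleftrightarrow> v \<in> cube n \<and> (\<exists>j\<in>s v. u = sdiff v {j})"
  unfolding arcs_def by auto

lemma reach_cube: "reaches n s w z \<Longrightarrow> w \<in> cube n \<Longrightarrow> z \<in> cube n"
  unfolding reaches_def
  by (induction rule: rtrancl_induct) (auto simp: arc_iff nb_cube)

lemma reach_nb: "reaches n s w z \<Longrightarrow> w \<in> cube n \<Longrightarrow> j \<in> s z \<Longrightarrow> reaches n s w (sdiff z {j})"
proof -
  assume a: "reaches n s w z" "w \<in> cube n" "j \<in> s z"
  then have "z \<in> cube n" using reach_cube by blast
  then have "(z, sdiff z {j}) \<in> arcs n s" using a(3) by (auto simp: arc_iff)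
  then show ?thesis using a(1) unfolding reaches_def by (rule rtrancl_into_rtrancl[rotated])
qed

definition f where "f x = real (card (reachmap n s x))"

lemma f_nonneg: "f x \<ge> 0" unfolding f_def by simp

lemma reachmap_sub: "w \<in> cube n \<Longrightarrow> reachmap n s w \<subseteq> {..<n}"
  unfolding reachmap_def using s_sub reach_cube by blast

lemma reachmap_mono: "reaches n s w z \<Longrightarrow> reachmap n s z \<subseteq> reachmap n s w"
  unfolding reachmap_def reaches_def by (auto intro: rtrancl_trans)

lemma f_mono: "reaches n s w z \<Longrightarrow> w \<in> cube n \<Longrightarrow> f z \<le> f w"
  unfolding f_def using reachmap_mono reachmap_sub
  by (meson card_mono finite_lessThan finite_subset of_nat_le_iff)

lemma f_le_n: "w \<in> cube n \<Longrightarrow> f w \<le> n"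
  unfolding f_def using reachmap_sub card_mono[of "{..<n}"] by fastforce

lemma L1:
  assumes w: "w \<in> cube n" and c: "c \<ge> 0" and g: "\<And>z. reaches n s w z \<Longrightarrow> g z \<le> c"
  shows "reaches n s w z \<Longrightarrow> (T s ^^ k) g z \<le> c"
proof (induction k arbitrary: z)
  case 0 then show ?case using g by simp
next
  case (Suc k)
  have "(\<Sum>j\<in>s z. (T s ^^ k) g (sdiff z {j})) \<le> (\<Sum>j\<in>s z. c)"
    by (rule sum_mono) (use Suc.IH reach_nb Suc.prems w in blast)
  also have "\<dots> = real (card (s z)) * c" by simp
  finally have le: "(\<Sum>j\<in>s z. (T s ^^ k) g (sdiff z {j})) \<le> real (card (s z)) * c" .
  show ?case
  proof (cases "card (s z) = 0")
    case True then show ?thesis using c by (simp add: T_app[of s "(T s ^^ k) g" z])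
  next
    case False then show ?thesis using le by (simp add: T_app[of s "(T s ^^ k) g" z] pos_divide_le_eq mult.commute)
  qed
qed

lemma L2:
  assumes w: "w \<in> cube n" and c: "c \<ge> 0" and g: "\<And>z. reaches n s w z \<Longrightarrow> g z \<le> c"
    and gu: "g u \<le> c - 1"
  shows "(x, u) \<in> (arcs n s) ^^ k \<Longrightarrow> reaches n s w x \<Longrightarrow> (T s ^^ k) g x \<le> c - 1 / real n ^ k"
proof (induction k arbitrary: x)
  case 0 then show ?case using gu by simp
next
  case (Suc k)
  from relpow_Suc_D2[OF Suc.prems(1)] obtain y where xy: "(x,y) \<in> arcs n s"
    and yu: "(y,u) \<in> arcs n s ^^ k" by blast
  from xy obtain j0 where xc: "x \<in> cube n" and j0: "j0 \<in> s x" and y: "y = sdiff x {j0}"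
    by (auto simp: arc_iff)
  have ry: "reaches n s w y" using Suc.prems(2) xy unfolding reaches_def
    by (rule rtrancl_into_rtrancl)
  define G where "G = (T s ^^ k) g"
  have IHy: "G y \<le> c - 1 / real n ^ k" unfolding G_def by (rule Suc.IH[OF yu ry])
  have Gle: "G (sdiff x {j}) \<le> c" if "j \<in> s x" for j
  proof -
    have rj: "reaches n s w (sdiff x {j})" by (rule reach_nb[OF Suc.prems(2) w that])
    show ?thesis unfolding G_def by (rule L1[of w c g, OF w c _ rj]) (rule g)
  qed
  have fin: "finite (s x)" using fin_s xc .
  define m where "m = card (s x)"
  have "s x \<noteq> {}" using j0 by auto
  then have "card (s x) > 0" using fin by (simp add: card_gt_0_iff)
  then have m1: "m \<ge> 1" unfolding m_def by simp
  have mn: "m \<le> n" unfolding m_def using card_s xc .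
  have e1: "(\<Sum>j\<in>s x. G (sdiff x {j})) = G y + (\<Sum>j\<in>s x - {j0}. G (sdiff x {j}))"
    using sum.remove[OF fin j0] y by simp
  have e2: "(\<Sum>j\<in>s x - {j0}. G (sdiff x {j})) \<le> (\<Sum>j\<in>s x - {j0}. c)"
    by (rule sum_mono) (use Gle in auto)
  have e3: "(\<Sum>j\<in>s x - {j0}. c) = (real m - 1) * c"
    using fin j0 m1 unfolding m_def by (simp add: card_Diff_singleton of_nat_diff)
  define D where "D = 1 / real n ^ k"
  have D0: "D \<ge> 0" unfolding D_def by simp
  have S: "(\<Sum>j\<in>s x. G (sdiff x {j})) \<le> real m * c - D"
  proof -
    have "(real m - 1) * c = real m * c - c" by (simp add: algebra_simps)
    then show ?thesis using e1 e2 e3 IHy unfolding D_def by linarith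
  qed
  have mpos: "real m > 0" using m1 by simp
  have "(T s ^^ Suc k) g x = (\<Sum>j\<in>s x. G (sdiff x {j})) / real m"
    by (simp add: G_def T_app[of s "(T s ^^ k) g" x] m_def)
  also have "\<dots> \<le> (real m * c - D) / real m"
    using S mpos by (simp add: divide_right_mono)
  also have "\<dots> = c - D / real m" using mpos by (simp add: field_simps)
  also have "\<dots> \<le> c - D / real n"
  proof -
    have "D / real n \<le> D / real m"
      using D0 mpos mn by (intro divide_left_mono) auto
    then show ?thesis by simp
  qed
  also have "D / real n = 1 / real n ^ Suc k" unfolding D_def by simp
  finally show ?case .
qed

lemma Tpow_mono:
  "(\<And>x. x \<in> cube n \<Longrightarrow> g x \<le> h x) \<Longrightarrow> x \<in> cube n \<Longrightarrow> (T s ^^ k) g x \<le> (T s ^^ k) h x"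
proof (induction k arbitrary: x)
  case 0 then show ?case by simp
next
  case (Suc k)
  have "(\<Sum>j\<in>s x. (T s ^^ k) g (sdiff x {j})) \<le> (\<Sum>j\<in>s x. (T s ^^ k) h (sdiff x {j}))"
    by (rule sum_mono) (use Suc nb_cube in blast)
  then show ?case by (simp add: T_app[of s "(T s ^^ k) g" x] T_app[of s "(T s ^^ k) h" x] divide_right_mono)
qed

lemma block:
  assumes N: "nice n s i" and i: "i \<ge> 1" and w: "w \<in> cube n"
  shows "real n ^ i * (T s ^^ i) f w + ns s w \<le> real n ^ i * f w"
proof (cases "s w = {}")
  case True
  then show ?thesis using Tpow_sink[of s w i f, OF True i] f_nonneg[of w] by (simp add: ns_def)
next
  case False
  from N w False obtain u where cov: "covered n s i w u" unfolding nice_def by blast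
  then obtain m where mi: "m \<le> i" and wu: "(w,u) \<in> arcs n s ^^ m"
    and ps: "reachmap n s u \<subset> reachmap n s w"
    unfolding covered_def dist_le_def by blast
  have ruw: "reaches n s w u" unfolding reaches_def using wu by (rule relpow_imp_rtrancl)
  have uc: "u \<in> cube n" using reach_cube ruw w by blast
  have "card (reachmap n s u) < card (reachmap n s w)"
    using ps reachmap_sub[OF w] by (meson finite_lessThan finite_subset psubset_card_mono)
  then have fu: "f u \<le> f w - 1" unfolding f_def by simp
  define g where "g = (T s ^^ (i - m)) f"
  have gle: "\<And>z. reaches n s w z \<Longrightarrow> g z \<le> f w"
    unfolding g_def using L1[OF w f_nonneg, of f] f_mono w by blast
  have "g u \<le> f u"
    unfolding g_def using L1[OF uc f_nonneg, of f] f_mono uc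
    by (simp add: reaches_def)
  then have gu: "g u \<le> f w - 1" using fu by simp
  have rww: "reaches n s w w" by (simp add: reaches_def)
  have L: "(T s ^^ m) g w \<le> f w - 1 / real n ^ m"
    using L2[of w "f w" g u, OF w f_nonneg gle gu wu rww] .
  have "(T s ^^ i) f = (T s ^^ (m + (i - m))) f" using mi by simp
  also have "\<dots> = (T s ^^ m) g" unfolding g_def by (simp add: funpow_add)
  finally have Ti: "(T s ^^ i) f w \<le> f w - 1 / real n ^ m" using L by simp
  obtain j where "j \<in> s w" using False by blast
  then have n1: "n \<ge> 1" using s_sub[OF w] by auto
  have pm: "real n ^ m > 0" using n1 by simp
  have "real n ^ m \<le> real n ^ i" using n1 mi by (intro power_increasing) auto
  then have q: "real n ^ i / real n ^ m \<ge> 1" using pm by simp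
  have "real n ^ i * (T s ^^ i) f w \<le> real n ^ i * (f w - 1 / real n ^ m)"
    using Ti by (intro mult_left_mono) auto
  also have "\<dots> = real n ^ i * f w - real n ^ i / real n ^ m" by (simp add: right_diff_distrib)
  finally show ?thesis using q False by (simp add: ns_def)
qed

lemma Tns_le: "x \<in> cube n \<Longrightarrow> T s (ns s) x \<le> ns s x"
proof (cases "s x = {}")
  case True then show ?thesis by (simp add: T_sink ns_def)
next
  case False
  assume x: "x \<in> cube n"
  have "(T s ^^ 1) (ns s) x \<le> 1"
    by (rule L1[of x 1 "ns s", OF x]) (auto simp: ns_def reaches_def)
  then show ?thesis using False by (simp add: ns_def)
qed

lemma re_dist_T:
  assumes v0: "v0 \<in> cube n"
  shows "(\<Sum>u\<in>cube n. re_dist n s v0 k u * g u) = (T s ^^ k) (\<lambda>u. ns s u * g u) v0"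
proof (induction k arbitrary: g)
  case 0
  have "(\<Sum>u\<in>cube n. re_dist n s v0 0 u * g u) = (\<Sum>u\<in>cube n. if u = v0 then ns s u * g u else 0)"
    by (rule sum.cong) (auto simp: ns_def)
  also have "\<dots> = ns s v0 * g v0" using v0 by (simp add: sum.delta cube_def)
  finally show ?case by simp
next
  case (Suc k)
  let ?r = "re_dist n s v0 k"
  let ?F = "\<lambda>u w j. if sdiff w {j} = u then ?r w / real (card (s w)) * (ns s u * g u) else 0"
  have "(\<Sum>u\<in>cube n. re_dist n s v0 (Suc k) u * g u) = (\<Sum>u\<in>cube n. \<Sum>w\<in>cube n. \<Sum>j\<in>s w. ?F u w j)"
  proof (rule sum.cong[OF refl])
    fix u assume "u \<in> cube n"
    show "re_dist n s v0 (Suc k) u * g u = (\<Sum>w\<in>cube n. \<Sum>j\<in>s w. ?F u w j)"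
    proof (cases "s u = {}")
      case True
      then have "ns s u = 0" by (simp add: ns_def)
      have "(\<Sum>w\<in>cube n. \<Sum>j\<in>s w. ?F u w j) = 0"
        by (intro sum.neutral ballI) (simp add: \<open>ns s u = 0\<close>)
      then show ?thesis using True by simp
    next
      case False
      then have nsu: "ns s u = 1" by (simp add: ns_def)
      show ?thesis unfolding re_dist.simps using False
        by (simp add: nsu sum_distrib_right) (intro sum.cong refl, simp add: nsu)
    qed
  qed
  also have "\<dots> = (\<Sum>w\<in>cube n. \<Sum>u\<in>cube n. \<Sum>j\<in>s w. ?F u w j)"
    by (rule sum.swap)
  also have "\<dots> = (\<Sum>w\<in>cube n. \<Sum>j\<in>s w. \<Sum>u\<in>cube n. ?F u w j)"
    by (rule sum.cong[OF refl], rule sum.swap)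
  also have "\<dots> = (\<Sum>w\<in>cube n. \<Sum>j\<in>s w. ?r w / real (card (s w)) * (ns s (sdiff w {j}) * g (sdiff w {j})))"
    by (intro sum.cong refl) (simp add: nb_cube sum.delta' fin_cube)
  also have "\<dots> = (\<Sum>w\<in>cube n. ?r w * T s (\<lambda>u. ns s u * g u) w)"
    by (intro sum.cong refl)
       (simp add: T_app[of s "\<lambda>u. ns s u * g u"] sum_distrib_left sum_divide_distrib)
  also have "\<dots> = (T s ^^ k) (\<lambda>u. ns s u * T s (\<lambda>u. ns s u * g u) u) v0" by (rule Suc.IH)
  also have "(\<lambda>u. ns s u * T s (\<lambda>u. ns s u * g u) u) = T s (\<lambda>u. ns s u * g u)"
    by (auto simp: ns_def T_sink)
  finally show ?case by (simp add: funpow_Suc_right del: funpow.simps)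
qed

lemma main_bound:
  assumes N: "nice n s i" and i: "i \<ge> 1" and v0: "v0 \<in> cube n"
  shows "(\<Sum>k<K. (T s ^^ k) (ns s) v0) \<le> real i * real n ^ (i + 1)"
proof -
  define a where "a t = (T s ^^ t) f v0" for t
  define P where "P t = (T s ^^ t) (ns s) v0" for t
  define q where "q = real n ^ i"
  have q0: "q \<ge> 0" unfolding q_def by simp
  have a0: "\<And>t. a t \<ge> 0" unfolding a_def by (rule Tpow_nonneg) (rule f_nonneg)
  have P0: "\<And>t. P t \<ge> 0" unfolding P_def by (rule Tpow_nonneg) (simp add: ns_def)
  have F1: "q * a (t + i) + P t \<le> q * a t" for t
  proof -
    have "(T s ^^ t) (\<lambda>x. q * (T s ^^ i) f x + ns s x) v0 \<le> (T s ^^ t) (\<lambda>x. q * f x + 0) v0"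
      by (rule Tpow_mono[OF _ v0]) (use block[OF N i] q_def in simp)
    also have "\<dots> = q * a t" unfolding a_def by (simp only: Tpow_lin Tpow_zero)
    finally show ?thesis unfolding a_def P_def Tpow_lin
      by (simp add: funpow_add del: funpow.simps)
  qed
  have F2: "decseq P"
  proof (rule decseq_SucI)
    fix t
    have "(T s ^^ t) (T s (ns s)) v0 \<le> (T s ^^ t) (ns s) v0"
      by (rule Tpow_mono[OF Tns_le v0])
    then show "P (Suc t) \<le> P t" unfolding P_def by (simp add: funpow_Suc_right del: funpow.simps)
  qed
  have claim: "(\<Sum>k<M*i. P k) \<le> real i * (q * a 0 - q * a (M*i))" for M
  proof (induction M)
    case 0 then show ?case by simp
  next
    case (Suc M)
    have sp: "(\<Sum>k<Suc M * i. P k) = (\<Sum>k<M*i. P k) + (\<Sum>k\<in>{M*i..<M*i+i}. P k)"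
      by (simp add: lessThan_atLeast0 sum.atLeastLessThan_concat add.commute)
    have "(\<Sum>k\<in>{M*i..<M*i+i}. P k) \<le> (\<Sum>k\<in>{M*i..<M*i+i}. P (M*i))"
      by (rule sum_mono) (use F2 in \<open>auto simp: decseq_def\<close>)
    also have "\<dots> = real i * P (M*i)" by simp
    also have "\<dots> \<le> real i * (q * a (M*i) - q * a (M*i+i))"
      using F1[of "M*i"] by (intro mult_left_mono) auto
    finally have "(\<Sum>k\<in>{M*i..<M*i+i}. P k) \<le> real i * (q * a (M*i) - q * a (M*i+i))" .
    then show ?case using Suc.IH sp by (simp add: algebra_simps)
  qed
  have "(\<Sum>k<K. P k) \<le> (\<Sum>k<K*i. P k)"
    using i P0 by (intro sum_mono2) auto
  also have "\<dots> \<le> real i * (q * a 0 - q * a (K*i))" by (rule claim)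
  also have "\<dots> \<le> real i * (q * a 0)" using a0 q0 by (intro mult_left_mono) auto
  also have "\<dots> \<le> real i * (q * real n)"
    using f_le_n[OF v0] q0 unfolding a_def by (intro mult_left_mono) auto
  also have "\<dots> = real i * real n ^ (i + 1)" unfolding q_def by simp
  finally show ?thesis unfolding P_def .
qed

end

theorem theorem4:
  fixes i :: nat
  assumes "i \<ge> 1"
  shows "\<exists>C::real. C > 0 \<and>
    (\<forall>n s v. USO n s \<longrightarrow> nice n s i \<longrightarrow> v \<in> cube n \<longrightarrow>
       RE_expected_steps n s v \<le> ennreal (C * real n ^ (i + 1)))"
proof (intro exI[of _ "real i"] conjI allI impI)
  show "real i > 0" using assms by simp
  fix n s v
  assume U: "USO n s" and Nc: "nice n s i" and v: "v \<in> cube n"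
  interpret orient n s using U by unfold_locales (simp add: USO_def)
  have P: "(\<Sum>u\<in>cube n. re_dist n s v k u) = (T s ^^ k) (ns s) v" for k
    using re_dist_T[OF v, of k "\<lambda>_. 1"] by simp
  have nn: "(T s ^^ k) (ns s) v \<ge> 0" for k by (rule Tpow_nonneg) (simp add: ns_def)
  show "RE_expected_steps n s v \<le> ennreal (real i * real n ^ (i + 1))"
    unfolding RE_expected_steps_def P
  proof (rule suminf_le_const)
    show "summable (\<lambda>k. ennreal ((T s ^^ k) (ns s) v))" by simp
    fix K
    have "(\<Sum>k<K. ennreal ((T s ^^ k) (ns s) v)) = ennreal (\<Sum>k<K. (T s ^^ k) (ns s) v)"
      using nn by simp
    also have "\<dots> \<le> ennreal (real i * real n ^ (i + 1))"
      by (rule ennreal_leI) (rule main_bound[OF Nc assms v])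
    finally show "(\<Sum>k<K. ennreal ((T s ^^ k) (ns s) v)) \<le> ennreal (real i * real n ^ (i + 1))" .
  qed
qed

end
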